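(* Let $Y$ be a finite poset with a unique maximal node, let $(S,M)$ be a reduced quasi-excellent local ring containing $\mathbb Q$ with $|S|=|S/M|=c$, and let $\Psi:Y\to\operatorname{Spec}(S)$ be a saturated embedding that is coheight-preserving along $\operatorname{Min}(S)$. Then $\dim(Y)=\dim(S)$.
   Context: $c$ is the cardinality of $\mathbb R$. $\dim$ of a poset = supremum of lengths of finite chains (length = number of elements minus one); $x^{\uparrow}_Y=\{z\in Y:x\le z\}$. A saturated embedding $f$ satisfies $x\le y\iff f(x)\le f(y)$ and $x<_cy\Rightarrow f(x)<_cf(y)$, where $x<_cy$ means $x<y$ with nothing strictly between. $\operatorname{Spec}(S)$ is ordered by inclusion. $\Psi$ is coheight-preserving along $\operatorname{Min}(S)$ if for every minimal prime $P$ of $S$ there is $x\in Y$ with $\Psi(x)=P$ and $\dim(S/P)=\dim(x^{\uparrow}_Y)$. *)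

theory Defs
  imports "HOL-Algebra.Algebra" "HOL-Library.Equipollence" "HOL-Library.Extended_Nat"
begin

definition pdim :: "('c \<Rightarrow> 'c \<Rightarrow> bool) \<Rightarrow> 'c set \<Rightarrow> enat" where
  "pdim r A = (SUP C \<in> {C. C \<subseteq> A \<and> finite C \<and> C \<noteq> {} \<and>
                        (\<forall>x\<in>C. \<forall>y\<in>C. r x y \<or> r y x)}. enat (card C - 1))"

definition covby :: "('c \<Rightarrow> 'c \<Rightarrow> bool) \<Rightarrow> 'c set \<Rightarrow> 'c \<Rightarrow> 'c \<Rightarrow> bool" where
  "covby s A x y \<longleftrightarrow> x \<in> A \<and> y \<in> A \<and> s x y \<and> \<not> (\<exists>z\<in>A. s x z \<and> s z y)"

definition Spec :: "('a, 'b) ring_scheme \<Rightarrow> 'a set set" where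
  "Spec R = {P. primeideal P R}"

definition krull_dim :: "('a, 'b) ring_scheme \<Rightarrow> enat" where
  "krull_dim R = pdim (\<subseteq>) (Spec R)"

definition min_primes :: "('a, 'b) ring_scheme \<Rightarrow> 'a set set" where
  "min_primes R = {P \<in> Spec R. \<forall>Q \<in> Spec R. Q \<subseteq> P \<longrightarrow> Q = P}"

definition local_ring :: "('a, 'b) ring_scheme \<Rightarrow> 'a set \<Rightarrow> bool" where
  "local_ring R M \<longleftrightarrow> cring R \<and> maximalideal M R \<and> (\<forall>I. maximalideal I R \<longrightarrow> I = M)"

definition reduced_ring :: "('a, 'b) ring_scheme \<Rightarrow> bool" where
  "reduced_ring R \<longleftrightarrow> (\<forall>x \<in> carrier R. \<forall>n::nat. x [^]\<^bsub>R\<^esub> n = \<zero>\<^bsub>R\<^esub> \<longrightarrow> x = \<zero>\<^bsub>R\<^esub>)"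

text \<open>R contains Q: every positive integer multiple of 1 is a unit
  (equivalently, the canonical map Z -> R extends to Q -> R).\<close>
definition contains_rationals :: "('a, 'b) ring_scheme \<Rightarrow> bool" where
  "contains_rationals R \<longleftrightarrow> (\<forall>n::nat. n > 0 \<longrightarrow> [n] \<cdot>\<^bsub>R\<^esub> \<one>\<^bsub>R\<^esub> \<in> Units R)"

definition saturated_embedding :: "('y::order \<Rightarrow> 'a set) \<Rightarrow> ('a, 'b) ring_scheme \<Rightarrow> bool" where
  "saturated_embedding \<Psi> R \<longleftrightarrow>
     (\<forall>x. \<Psi> x \<in> Spec R) \<and>
     (\<forall>x y. x \<le> y \<longleftrightarrow> \<Psi> x \<subseteq> \<Psi> y) \<and>
     (\<forall>x y. covby (<) UNIV x y \<longrightarrow> covby (\<subset>) (Spec R) (\<Psi> x) (\<Psi> y))"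

definition coheight_preserving_min :: "('y::order \<Rightarrow> 'a set) \<Rightarrow> ('a, 'b) ring_scheme \<Rightarrow> bool" where
  "coheight_preserving_min \<Psi> R \<longleftrightarrow>
     (\<forall>P \<in> min_primes R. \<exists>x. \<Psi> x = P \<and> krull_dim (R Quot P) = pdim (\<le>) {z. x \<le> z})"

end

theory Submission
  imports Defs
begin

lemma chain_map:
  assumes "C \<subseteq> A" "finite C" "C \<noteq> {}" "\<forall>x\<in>C. \<forall>y\<in>C. r x y \<or> r y x"
    and "f ` C \<subseteq> B" "inj_on f C" "\<forall>x\<in>C. \<forall>y\<in>C. r x y \<longrightarrow> s (f x) (f y)"
  shows "enat (card C - 1) \<le> pdim s B"
  unfolding pdim_def
proof (rule SUP_upper2[of "f ` C"])
  show "f ` C \<in> {C. C \<subseteq> B \<and> finite C \<and> C \<noteq> {} \<and> (\<forall>x\<in>C. \<forall>y\<in>C. s x y \<or> s y x)}"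
    using assms by blast
  show "enat (card C - 1) \<le> enat (card (f ` C) - 1)"
    using assms by (simp add: card_image)
qed

lemma pdim_mono: "A \<subseteq> B \<Longrightarrow> pdim r A \<le> pdim r B"
  unfolding pdim_def by (rule SUP_subset_mono) auto

lemma min_prime_below:
  fixes R (structure)
  assumes cr: "cring R" and Q: "Q \<in> Spec R"
  shows "\<exists>P\<in>min_primes R. P \<subseteq> Q"
proof -
  interpret cring R by (rule cr)
  define A where "A = {P \<in> Spec R. P \<subseteq> Q}"
  have po: "partial_order_on A (relation_of (\<lambda>x y. y \<subseteq> x) A)"
    by (rule partial_order_on_relation_ofI) auto
  have "\<exists>m \<in> A. \<forall>a \<in> A. m \<supseteq> a \<longrightarrow> a = m"
  proof (rule predicate_Zorn[OF po])
    fix C assume C: "C \<in> Chains (relation_of (\<lambda>x y. y \<subseteq> x) A)"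
    have CA: "C \<subseteq> A" and ch: "\<forall>a\<in>C. \<forall>b\<in>C. a \<subseteq> b \<or> b \<subseteq> a"
      using C unfolding Chains_def relation_of_def by auto
    show "\<exists>u\<in>A. \<forall>a\<in>C. u \<subseteq> a"
    proof (cases "C = {}")
      case True
      then show ?thesis using Q unfolding A_def by auto
    next
      case False
      have pr: "\<And>I. I \<in> C \<Longrightarrow> primeideal I R" using CA unfolding A_def Spec_def by auto
      have id: "ideal (\<Inter>C) R"
        by (rule i_Intersect) (use pr False primeideal.axioms(1) in auto)
      have nc: "carrier R \<noteq> \<Inter>C"
      proof
        assume "carrier R = \<Inter>C"
        with False obtain I where "I \<in> C" "carrier R \<subseteq> I" by blast
        then show False using pr[of I] primeideal.I_notcarr[of I R]
          ideal.axioms(1)[of I R] additive_subgroup.a_subset[of I R] primeideal.axioms(1)[of I R] by blast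
      qed
      have "primeideal (\<Inter>C) R"
      proof (rule primeidealI[OF id cr nc])
        fix a b assume ab: "a \<in> carrier R" "b \<in> carrier R" "a \<otimes> b \<in> \<Inter>C"
        show "a \<in> \<Inter>C \<or> b \<in> \<Inter>C"
        proof (rule ccontr)
          assume "\<not> (a \<in> \<Inter>C \<or> b \<in> \<Inter>C)"
          then obtain I J where IJ: "I \<in> C" "a \<notin> I" "J \<in> C" "b \<notin> J" by blast
          have "a \<in> I \<or> b \<in> I" using primeideal.I_prime[OF pr[OF IJ(1)] ab(1,2)] ab(3) IJ(1) by blast
          moreover have "a \<in> J \<or> b \<in> J" using primeideal.I_prime[OF pr[OF IJ(3)] ab(1,2)] ab(3) IJ(3) by blast
          ultimately show False using ch IJ by blast
        qed
      qed
      then have "\<Inter>C \<in> A" using False CA unfolding A_def Spec_def by auto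
      then show ?thesis by blast
    qed
  qed
  then obtain m where m: "m \<in> A" "\<forall>a \<in> A. m \<supseteq> a \<longrightarrow> a = m" by blast
  have "m \<in> min_primes R"
    unfolding min_primes_def using m unfolding A_def by auto
  then show ?thesis using m unfolding A_def by blast
qed

lemma quot_prime:
  fixes R (structure)
  assumes cr: "cring R" and P: "primeideal P R" and Q: "primeideal Q R" and PQ: "P \<subseteq> Q"
  shows "primeideal ((+>\<^bsub>R\<^esub>) P ` Q) (R Quot P)" and "\<Union> ((+>\<^bsub>R\<^esub>) P ` Q) = Q"
proof -
  interpret cring R by (rule cr)
  have iP: "ideal P R" and iQ: "ideal Q R" using P Q primeideal.axioms(1) by auto
  show U: "\<Union> ((+>) P ` Q) = Q" using ideal_incl_iff[OF iP iQ] PQ by auto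
  have iQ': "ideal ((+>) P ` Q) (R Quot P)" by (rule ring_ideal_imp_quot_ideal[OF iP iQ])
  have sub: "(+>) P ` Q \<subseteq> carrier (R Quot P)"
    using iQ' ideal.axioms(1) additive_subgroup.a_subset by blast
  have mem: "\<And>a. a \<in> carrier R \<Longrightarrow> (a \<in> Q) = (P +> a \<in> (+>) P ` Q)"
    using canonical_proj_vimage_mem_iff[OF iP sub] U by auto
  have carr: "carrier (R Quot P) = (+>) P ` carrier R"
    unfolding FactRing_def A_RCOSETS_def' by auto
  show "primeideal ((+>) P ` Q) (R Quot P)"
  proof (rule primeidealI[OF iQ' ideal.quotient_is_cring[OF iP cr]])
    show "carrier (R Quot P) \<noteq> (+>) P ` Q"
    proof
      assume "carrier (R Quot P) = (+>) P ` Q"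
      then have "\<forall>a\<in>carrier R. a \<in> Q" using mem carr by auto
      then show False using primeideal.I_notcarr[OF Q] iQ ideal.axioms(1) additive_subgroup.a_subset by blast
    qed
  next
    fix a b assume ab: "a \<in> carrier (R Quot P)" "b \<in> carrier (R Quot P)"
      "a \<otimes>\<^bsub>R Quot P\<^esub> b \<in> (+>) P ` Q"
    obtain x y where xy: "x \<in> carrier R" "y \<in> carrier R" "a = P +> x" "b = P +> y"
      using ab(1,2) carr by auto
    have "a \<otimes>\<^bsub>R Quot P\<^esub> b = P +> (x \<otimes> y)"
      using ideal.rcoset_mult_add[OF iP xy(1,2)] xy unfolding FactRing_def by simp
    then have "x \<otimes> y \<in> Q" using mem[of "x \<otimes> y"] ab(3) xy by auto
    then have "x \<in> Q \<or> y \<in> Q" using primeideal.I_prime[OF Q xy(1,2)] by blast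
    then show "a \<in> (+>) P ` Q \<or> b \<in> (+>) P ` Q" using xy mem by auto
  qed
qed

theorem mainTheorem9:
  fixes R :: "('a, 'b) ring_scheme" and M :: "'a set"
    and \<Psi> :: "'y::{order,finite} \<Rightarrow> 'a set"
  assumes unique_max: "\<exists>!m::'y. \<forall>z. m \<le> z \<longrightarrow> z = m"
    and local: "local_ring R M"
    and noeth: "noetherian_ring R"
    and reduced: "reduced_ring R"
    and rat: "contains_rationals R"
    and card_S: "carrier R \<approx> (UNIV :: real set)"
    and card_res: "carrier (R Quot M) \<approx> (UNIV :: real set)"
    and sat: "saturated_embedding \<Psi> R"
    and coh: "coheight_preserving_min \<Psi> R"
  shows "pdim (\<le>) (UNIV :: 'y set) = krull_dim R"
proof (rule antisym)
  have cr: "cring R" using local unfolding local_ring_def by auto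
  have inS: "\<And>x. \<Psi> x \<in> Spec R" and ord: "\<And>x y. x \<le> y \<longleftrightarrow> \<Psi> x \<subseteq> \<Psi> y"
    using sat unfolding saturated_embedding_def by auto
  have inj: "inj \<Psi>" by (rule injI) (metis ord order_refl antisym)
  show "pdim (\<le>) (UNIV :: 'y set) \<le> krull_dim R"
    unfolding krull_dim_def pdim_def[of "(\<le>) :: 'y \<Rightarrow> 'y \<Rightarrow> bool"]
  proof (rule SUP_least)
    fix C :: "'y set" assume C: "C \<in> {C. C \<subseteq> UNIV \<and> finite C \<and> C \<noteq> {} \<and> (\<forall>x\<in>C. \<forall>y\<in>C. x \<le> y \<or> y \<le> x)}"
    show "enat (card C - 1) \<le> pdim (\<subseteq>) (Spec R)"
      proof (rule chain_map[of C UNIV "(\<le>)" \<Psi>])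
      show "inj_on \<Psi> C" using inj by (rule inj_on_subset) simp
      show "C \<subseteq> UNIV" by simp
      show "finite C" "C \<noteq> {}" "\<forall>x\<in>C. \<forall>y\<in>C. x \<le> y \<or> y \<le> x" using C by auto
      show "\<Psi> ` C \<subseteq> Spec R" using inS by auto
      show "\<forall>x\<in>C. \<forall>y\<in>C. x \<le> y \<longrightarrow> \<Psi> x \<subseteq> \<Psi> y" using ord by blast
    qed
  qed
  show "krull_dim R \<le> pdim (\<le>) (UNIV :: 'y set)"
    unfolding krull_dim_def pdim_def[of "(\<subseteq>)"]
  proof (rule SUP_least)
    fix C assume C: "C \<in> {C. C \<subseteq> Spec R \<and> finite C \<and> C \<noteq> {} \<and> (\<forall>x\<in>C. \<forall>y\<in>C. x \<subseteq> y \<or> y \<subseteq> x)}"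
    have "\<Inter>C \<in> C" using C by (intro Inter_in_chain) (auto simp: subset.chain_def)
    then have "\<Inter>C \<in> Spec R" using C by auto
    then obtain P where P: "P \<in> min_primes R" "P \<subseteq> \<Inter>C" using min_prime_below[OF cr] by blast
    then obtain x where x: "\<Psi> x = P" "krull_dim (R Quot P) = pdim (\<le>) {z. x \<le> z}"
      using coh unfolding coheight_preserving_min_def by blast
    have Pp: "primeideal P R" using P unfolding min_primes_def Spec_def by auto
    let ?f = "\<lambda>Q. (+>\<^bsub>R\<^esub>) P ` Q"
    have Cp: "\<And>Q. Q \<in> C \<Longrightarrow> primeideal Q R \<and> P \<subseteq> Q" using C P unfolding Spec_def by auto
    have "enat (card C - 1) \<le> krull_dim (R Quot P)"
      unfolding krull_dim_def
    proof (rule chain_map[of C "Spec R" "(\<subseteq>)" ?f])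
      show "?f ` C \<subseteq> Spec (R Quot P)"
        using quot_prime(1)[OF cr Pp] Cp unfolding Spec_def by blast
      show "inj_on ?f C"
        by (rule inj_on_inverseI[where g = Union]) (use quot_prime(2)[OF cr Pp] Cp in blast)
    qed (use C in auto)
    also have "\<dots> \<le> pdim (\<le>) (UNIV :: 'y set)" using x(2) pdim_mono[of "{z. x \<le> z}" UNIV] by simp
    finally show "enat (card C - 1) \<le> pdim (\<le>) (UNIV :: 'y set)" .
  qed
qed

end
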